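(* Let $\alpha>0$, let $X_{0-}$ be a real-valued random variable and let $Z$ be a continuous stochastic process with $Z_0=0$, independent of $X_{0-}$. Fix $\Delta>0$. For $\ell\in M$ set $X^\Delta_t[\ell]=X_{0-}+Z_{\Delta\lfloor t/\Delta\rfloor}-\alpha\ell_{\Delta\lfloor t/\Delta\rfloor}$, $\tau^\Delta[\ell]=\inf\{t\ge0:X^\Delta_t[\ell]\le0\}$ and $\Gamma_\Delta[\ell]_t=\mathbb{P}(\tau^\Delta[\ell]\le t)$. Let $\ell^n,\ell\in M$ with $\ell^n_{\Delta\lfloor\cdot/\Delta\rfloor}\to\ell_{\Delta\lfloor\cdot/\Delta\rfloor}$ in $M$ and $\ell^n_0=\ell_0$ for all $n$. Assume in addition that either $\operatorname{law}(X_{0-})$ is atomless or $\operatorname{law}(Z_t)$ is atomless for every $t>0$. Then $\lim_{n\to\infty}\Gamma_\Delta[\ell^n]=\Gamma_\Delta[\ell]$ in $M$.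
   Context: $M$ is the set of càdlàg increasing functions $\ell:\overline{\mathbb{R}}\to[0,1]$ ($\overline{\mathbb{R}}$ the two-point compactification of $\mathbb{R}$) with $\ell_{0-}=0$ and $\ell_\infty=1$, with the topology: $\ell^n\to\ell$ iff $\ell^n_t\to\ell_t$ for all $t\in[0,\infty]$ at which $\ell$ is continuous. *)

theory Defs
  imports "HOL-Probability.Probability"
begin

definition inM :: "(ereal \<Rightarrow> real) \<Rightarrow> bool" where
  "inM l \<longleftrightarrow> mono l \<and> (\<forall>t. 0 \<le> l t \<and> l t \<le> 1)
     \<and> (\<forall>t. continuous (at_right t) l)
     \<and> (\<forall>t. \<exists>L. (l \<longlongrightarrow> L) (at_left t))
     \<and> (l \<longlongrightarrow> 0) (at_left 0)
     \<and> l \<infinity> = 1"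

definition Mconv :: "(nat \<Rightarrow> ereal \<Rightarrow> real) \<Rightarrow> (ereal \<Rightarrow> real) \<Rightarrow> bool" where
  "Mconv ls l \<longleftrightarrow> (\<forall>t::ereal. 0 \<le> t \<longrightarrow> isCont l t \<longrightarrow> (\<lambda>n. ls n t) \<longlonglongrightarrow> l t)"

definition disc :: "real \<Rightarrow> ereal \<Rightarrow> ereal" where
  "disc \<Delta> t = (case t of ereal r \<Rightarrow> ereal (\<Delta> * of_int \<lfloor>r / \<Delta>\<rfloor>) | _ \<Rightarrow> t)"

definition XD :: "real \<Rightarrow> real \<Rightarrow> ('a \<Rightarrow> real) \<Rightarrow> (real \<Rightarrow> 'a \<Rightarrow> real)
    \<Rightarrow> (ereal \<Rightarrow> real) \<Rightarrow> real \<Rightarrow> 'a \<Rightarrow> real" where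
  "XD \<alpha> \<Delta> X0 Z l t \<omega> =
     X0 \<omega> + Z (\<Delta> * of_int \<lfloor>t / \<Delta>\<rfloor>) \<omega> - \<alpha> * l (ereal (\<Delta> * of_int \<lfloor>t / \<Delta>\<rfloor>))"

definition tauD :: "real \<Rightarrow> real \<Rightarrow> ('a \<Rightarrow> real) \<Rightarrow> (real \<Rightarrow> 'a \<Rightarrow> real)
    \<Rightarrow> (ereal \<Rightarrow> real) \<Rightarrow> 'a \<Rightarrow> ereal" where
  "tauD \<alpha> \<Delta> X0 Z l \<omega> = Inf {ereal t | t. 0 \<le> t \<and> XD \<alpha> \<Delta> X0 Z l t \<omega> \<le> 0}"

definition GammaD :: "'a measure \<Rightarrow> real \<Rightarrow> real \<Rightarrow> ('a \<Rightarrow> real) \<Rightarrow> (real \<Rightarrow> 'a \<Rightarrow> real)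
    \<Rightarrow> (ereal \<Rightarrow> real) \<Rightarrow> ereal \<Rightarrow> real" where
  "GammaD P \<alpha> \<Delta> X0 Z l t = measure P {\<omega> \<in> space P. tauD \<alpha> \<Delta> X0 Z l \<omega> \<le> t}"

end

theory Submission
  imports Defs
begin

lemma null_sum:
  fixes P :: "'a measure" and X Y :: "'a \<Rightarrow> real"
  assumes ps: "prob_space P" and ind: "prob_space.indep_var P borel X borel Y"
    and atoms: "(\<forall>x. measure (distr P borel X) {x} = 0) \<or> (\<forall>x. measure (distr P borel Y) {x} = 0)"
  shows "measure P {\<omega>\<in>space P. X \<omega> + Y \<omega> = c} = 0"
proof -
  interpret prob_space P by fact
  have rv: "X \<in> borel_measurable P" "Y \<in> borel_measurable P"
    using ind indep_var_distribution_eq by auto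
  have eq: "distr P borel X \<Otimes>\<^sub>M distr P borel Y = distr P (borel \<Otimes>\<^sub>M borel) (\<lambda>x. (X x, Y x))"
    using ind indep_var_distribution_eq by auto
  interpret DX: prob_space "distr P borel X" using rv by (simp add: prob_space_distr)
  interpret DY: prob_space "distr P borel Y" using rv by (simp add: prob_space_distr)
  interpret pair_prob_space "distr P borel X" "distr P borel Y" ..
  define D where "D = {p \<in> space (borel \<Otimes>\<^sub>M borel). fst p + snd p = (c::real)}"
  have D: "D \<in> sets (borel \<Otimes>\<^sub>M borel)" unfolding D_def by measurable
  have pm: "(\<lambda>x. (X x, Y x)) \<in> measurable P (borel \<Otimes>\<^sub>M borel)" using rv by measurable
  have "{\<omega>\<in>space P. X \<omega> + Y \<omega> = c} = (\<lambda>x. (X x, Y x)) -` D \<inter> space P"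
    unfolding D_def by (auto simp: space_pair_measure)
  then have "emeasure P {\<omega>\<in>space P. X \<omega> + Y \<omega> = c} = emeasure (distr P (borel \<Otimes>\<^sub>M borel) (\<lambda>x. (X x, Y x))) D"
    using D pm by (simp add: emeasure_distr)
  also have "\<dots> = emeasure (distr P borel X \<Otimes>\<^sub>M distr P borel Y) D" using eq by simp
  also have "\<dots> = 0"
    using atoms
  proof
    assume a: "\<forall>x. measure (distr P borel X) {x} = 0"
    have "emeasure (distr P borel X \<Otimes>\<^sub>M distr P borel Y) D
       = (\<integral>\<^sup>+y. emeasure (distr P borel X) ((\<lambda>x. (x, y)) -` D) \<partial>distr P borel Y)"
      using D by (intro emeasure_pair_measure_alt2) simp
    also have "\<dots> = (\<integral>\<^sup>+y. 0 \<partial>distr P borel Y)"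
    proof (rule nn_integral_cong)
      fix y
      have "(\<lambda>x. (x, y)) -` D = {c - y}" unfolding D_def by (auto simp: space_pair_measure)
      then show "emeasure (distr P borel X) ((\<lambda>x. (x, y)) -` D) = 0"
        using a DX.emeasure_eq_measure by simp
    qed
    finally show ?thesis by simp
  next
    assume a: "\<forall>x. measure (distr P borel Y) {x} = 0"
    have "emeasure (distr P borel X \<Otimes>\<^sub>M distr P borel Y) D
       = (\<integral>\<^sup>+x. emeasure (distr P borel Y) (Pair x -` D) \<partial>distr P borel X)"
      using D by (intro DY.emeasure_pair_measure_alt) simp
    also have "\<dots> = (\<integral>\<^sup>+y. 0 \<partial>distr P borel X)"
    proof (rule nn_integral_cong)
      fix x
      have "Pair x -` D = {c - x}" unfolding D_def by (auto simp: space_pair_measure)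
      then show "emeasure (distr P borel Y) (Pair x -` D) = 0"
        using a DY.emeasure_eq_measure by simp
    qed
    finally show ?thesis by simp
  qed
  finally show ?thesis by (simp add: measure_def)
qed


lemma indep_from:
  fixes P :: "'a measure" and X0 :: "'a \<Rightarrow> real" and Z :: "real \<Rightarrow> 'a \<Rightarrow> real"
  assumes ps: "prob_space P" and X0: "X0 \<in> borel_measurable P" and Zs: "Z s \<in> borel_measurable P"
    and s: "0 \<le> s"
    and ind: "prob_space.indep_set P (sets (vimage_algebra (space P) X0 borel))
           (sets (vimage_algebra (space P) (\<lambda>\<omega>. restrict (\<lambda>t. Z t \<omega>) {0..})
              (Pi\<^sub>M {0..} (\<lambda>_. borel))))"
  shows "prob_space.indep_var P borel X0 borel (Z s)"
proof -
  interpret prob_space P by fact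
  let ?proc = "\<lambda>\<omega>. restrict (\<lambda>t. Z t \<omega>) {0..}"
  have sub: "{Z s -` A \<inter> space P | A. A \<in> sets borel} \<subseteq> {?proc -` B \<inter> space P | B. B \<in> sets (Pi\<^sub>M {0..} (\<lambda>_. (borel::real measure)))}"
  proof safe
    fix A :: "real set" assume A: "A \<in> sets borel"
    have m: "(\<lambda>f. f s) \<in> measurable (Pi\<^sub>M {0..} (\<lambda>_. (borel::real measure))) borel"
      using s by (intro measurable_component_singleton) simp
    have "(\<lambda>f. f s) -` A \<inter> space (Pi\<^sub>M {0..} (\<lambda>_. (borel::real measure))) \<in> sets (Pi\<^sub>M {0..} (\<lambda>_. (borel::real measure)))"
      using m A by (rule measurable_sets)
    moreover have "Z s -` A \<inter> space P = ?proc -` ((\<lambda>f. f s) -` A \<inter> space (Pi\<^sub>M {0..} (\<lambda>_. (borel::real measure)))) \<inter> space P"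
      using s by (auto simp: space_PiM)
    ultimately show "\<exists>B. Z s -` A \<inter> space P = ?proc -` B \<inter> space P \<and> B \<in> sets (Pi\<^sub>M {0..} (\<lambda>_. (borel::real measure)))"
      by blast
  qed
  have "indep_set (sigma_sets (space P) {X0 -` A \<inter> space P | A. A \<in> sets borel})
      (sigma_sets (space P) {Z s -` A \<inter> space P | A. A \<in> sets borel})"
    using ind unfolding indep_set_def
  proof (rule indep_sets_mono_sets)
    fix i :: bool
    show "(case i of True \<Rightarrow> sigma_sets (space P) {X0 -` A \<inter> space P | A. A \<in> sets borel}
         | False \<Rightarrow> sigma_sets (space P) {Z s -` A \<inter> space P | A. A \<in> sets borel})
       \<subseteq> (case i of True \<Rightarrow> sets (vimage_algebra (space P) X0 borel)
         | False \<Rightarrow> sets (vimage_algebra (space P) ?proc (Pi\<^sub>M {0..} (\<lambda>_. borel))))"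
      using sigma_sets_mono'[OF sub] by (cases i) (auto simp: sets_vimage_algebra)
  qed
  then show ?thesis using X0 Zs by (simp add: indep_var_eq)
qed


lemma tau_le:
  assumes D: "\<Delta> > 0" and r: "0 \<le> r"
  shows "tauD \<alpha> \<Delta> X0 Z l \<omega> \<le> ereal r \<longleftrightarrow>
    (\<exists>j::nat. j \<le> nat \<lfloor>r / \<Delta>\<rfloor> \<and> X0 \<omega> + Z (\<Delta> * real j) \<omega> \<le> \<alpha> * l (ereal (\<Delta> * real j)))"
proof
  assume "\<exists>j::nat. j \<le> nat \<lfloor>r / \<Delta>\<rfloor> \<and> X0 \<omega> + Z (\<Delta> * real j) \<omega> \<le> \<alpha> * l (ereal (\<Delta> * real j))"
  then obtain j :: nat where j: "j \<le> nat \<lfloor>r / \<Delta>\<rfloor>" and c: "X0 \<omega> + Z (\<Delta> * real j) \<omega> \<le> \<alpha> * l (ereal (\<Delta> * real j))"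
    by blast
  have fl: "\<lfloor>\<Delta> * real j / \<Delta>\<rfloor> = int j" using D by simp
  have "ereal (\<Delta> * real j) \<in> {ereal t | t. 0 \<le> t \<and> XD \<alpha> \<Delta> X0 Z l t \<omega> \<le> 0}"
    using c D fl by (auto simp: XD_def intro!: exI[of _ "\<Delta> * real j"])
  then have "tauD \<alpha> \<Delta> X0 Z l \<omega> \<le> ereal (\<Delta> * real j)"
    unfolding tauD_def by (rule Inf_lower)
  also have "\<Delta> * real j \<le> r"
  proof -
    have "int j \<le> \<lfloor>r / \<Delta>\<rfloor>" using j r D by (simp add: le_nat_iff)
    then have "real j \<le> r / \<Delta>" by linarith
    then show ?thesis using D by (simp add: field_simps)
  qed
  finally show "tauD \<alpha> \<Delta> X0 Z l \<omega> \<le> ereal r" by simp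
next
  assume le: "tauD \<alpha> \<Delta> X0 Z l \<omega> \<le> ereal r"
  show "\<exists>j::nat. j \<le> nat \<lfloor>r / \<Delta>\<rfloor> \<and> X0 \<omega> + Z (\<Delta> * real j) \<omega> \<le> \<alpha> * l (ereal (\<Delta> * real j))"
  proof (rule ccontr)
    assume no: "\<not> ?thesis"
    define K where "K = \<lfloor>r / \<Delta>\<rfloor>"
    have K0: "0 \<le> K" using r D by (simp add: K_def)
    have "ereal (\<Delta> * of_int (K + 1)) \<le> tauD \<alpha> \<Delta> X0 Z l \<omega>"
      unfolding tauD_def
    proof (rule Inf_greatest, clarify)
      fix t assume t: "0 \<le> t" "XD \<alpha> \<Delta> X0 Z l t \<omega> \<le> 0"
      define k where "k = \<lfloor>t / \<Delta>\<rfloor>"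
      have k0: "0 \<le> k" using t D by (simp add: k_def)
      have eqj: "\<Delta> * of_int k = \<Delta> * real (nat k)" using k0 by simp
      have "X0 \<omega> + Z (\<Delta> * real (nat k)) \<omega> \<le> \<alpha> * l (ereal (\<Delta> * real (nat k)))"
        using t(2) unfolding XD_def k_def[symmetric] eqj by simp
      with no have "\<not> nat k \<le> nat K" unfolding K_def by blast
      then have "K + 1 \<le> k" using K0 k0 by linarith
      then have "\<Delta> * of_int (K + 1) \<le> \<Delta> * of_int k" using D by simp
      also have "\<Delta> * of_int k \<le> t" using D unfolding k_def
        by (metis mult.commute of_int_floor_le pos_le_divide_eq)
      finally show "ereal (\<Delta> * of_int (K + 1)) \<le> ereal t" by simp
    qed
    moreover have "r < \<Delta> * of_int (K + 1)"
    proof -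
      have "r / \<Delta> < of_int (K + 1)" unfolding K_def by linarith
      then show ?thesis using D by (simp add: field_simps)
    qed
    ultimately show False using le by (metis ereal_less_eq(3) leD order_trans)
  qed
qed


lemma disc_eq:
  assumes D: "\<Delta> > 0" and s: "\<Delta> * real j \<le> s" "s < \<Delta> * real j + \<Delta>"
  shows "disc \<Delta> (ereal s) = ereal (\<Delta> * real j)"
proof -
  have "real j \<le> s / \<Delta>" "s / \<Delta> < real j + 1" using D s by (simp_all add: field_simps)
  then have "\<lfloor>s / \<Delta>\<rfloor> = int j" by (simp add: floor_eq_iff)
  then show ?thesis by (simp add: disc_def)
qed

lemma pt_conv:
  assumes D: "\<Delta> > 0" and MC: "Mconv (\<lambda>n. ls n \<circ> disc \<Delta>) (l \<circ> disc \<Delta>)"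
  shows "(\<lambda>n. ls n (ereal (\<Delta> * real j))) \<longlonglongrightarrow> l (ereal (\<Delta> * real j))"
proof -
  define t where "t = ereal (\<Delta> * real j + \<Delta> / 2)"
  have dt: "disc \<Delta> t = ereal (\<Delta> * real j)" unfolding t_def using D by (intro disc_eq) auto
  define U where "U = {ereal (\<Delta> * real j) <..< ereal (\<Delta> * real j + \<Delta>)}"
  have U: "open U" "t \<in> U" unfolding U_def t_def using D by auto
  have "\<forall>y\<in>U. disc \<Delta> y = ereal (\<Delta> * real j)"
  proof
    fix y assume "y \<in> U"
    then obtain s where y: "y = ereal s" and "\<Delta> * real j < s" "s < \<Delta> * real j + \<Delta>"
      unfolding U_def by (cases y) auto
    then show "disc \<Delta> y = ereal (\<Delta> * real j)" using D disc_eq by auto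
  qed
  then have "eventually (\<lambda>y. (l \<circ> disc \<Delta>) y = (l \<circ> disc \<Delta>) t) (nhds t)"
    using eventually_nhds_in_open[OF U] dt by (auto elim: eventually_mono)
  then have "eventually (\<lambda>y. (l \<circ> disc \<Delta>) y = (l \<circ> disc \<Delta>) t) (at t)"
    by (rule filter_leD[OF at_within_le_nhds])
  then have "isCont (l \<circ> disc \<Delta>) t" unfolding isCont_def by (rule tendsto_eventually)
  moreover have "0 \<le> t" unfolding t_def using D by simp
  ultimately have "(\<lambda>n. (ls n \<circ> disc \<Delta>) t) \<longlonglongrightarrow> (l \<circ> disc \<Delta>) t"
    using MC unfolding Mconv_def by blast
  then show ?thesis using dt by simp
qed


theorem lemma2p4:
  fixes P :: "'a measure" and \<alpha> \<Delta> :: real and X0 :: "'a \<Rightarrow> real"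
    and Z :: "real \<Rightarrow> 'a \<Rightarrow> real" and ls :: "nat \<Rightarrow> ereal \<Rightarrow> real" and l :: "ereal \<Rightarrow> real"
  assumes "prob_space P"
    and "\<alpha> > 0" and "\<Delta> > 0"
    and "X0 \<in> borel_measurable P"
    and "\<And>t. 0 \<le> t \<Longrightarrow> Z t \<in> borel_measurable P"
    and "\<And>\<omega>. \<omega> \<in> space P \<Longrightarrow> continuous_on {0..} (\<lambda>t. Z t \<omega>)"
    and "\<And>\<omega>. \<omega> \<in> space P \<Longrightarrow> Z 0 \<omega> = 0"
    and "prob_space.indep_set P (sets (vimage_algebra (space P) X0 borel))
           (sets (vimage_algebra (space P) (\<lambda>\<omega>. restrict (\<lambda>t. Z t \<omega>) {0..})
              (Pi\<^sub>M {0..} (\<lambda>_. borel))))"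
    and "\<And>n. inM (ls n)" and "inM l"
    and "Mconv (\<lambda>n. ls n \<circ> disc \<Delta>) (l \<circ> disc \<Delta>)"
    and "\<And>n. ls n 0 = l 0"
    and "(\<forall>x. measure (distr P borel X0) {x} = 0)
         \<or> (\<forall>t>0. \<forall>x. measure (distr P borel (Z t)) {x} = 0)"
  shows "Mconv (\<lambda>n. GammaD P \<alpha> \<Delta> X0 Z (ls n)) (GammaD P \<alpha> \<Delta> X0 Z l)"
proof -
  note ps = assms(1) and D = assms(3) and X0m = assms(4) and Zm = assms(5)
    and ind = assms(8) and MC = assms(11) and l0 = assms(12) and atoms = assms(13)
  interpret prob_space P by fact
  have Zj[measurable]: "Z (\<Delta> * real j) \<in> borel_measurable P" for j :: nat
    using D by (intro Zm) simp
  note X0m[measurable]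
  show ?thesis unfolding Mconv_def
  proof (intro allI impI)
    fix t :: ereal assume t0: "0 \<le> t" and "isCont (GammaD P \<alpha> \<Delta> X0 Z l) t"
    show "(\<lambda>n. GammaD P \<alpha> \<Delta> X0 Z (ls n) t) \<longlonglongrightarrow> GammaD P \<alpha> \<Delta> X0 Z l t"
    proof (cases t)
      case PInf
      then show ?thesis by (simp add: GammaD_def)
    next
      case MInf
      then show ?thesis using t0 by simp
    next
      case (real r)
      with t0 have r: "0 \<le> r" by simp
      define K where "K = nat \<lfloor>r / \<Delta>\<rfloor>"
      define A where "A = (\<lambda>(m::ereal \<Rightarrow> real). {\<omega> \<in> space P. \<exists>j. j \<le> K \<and>
          X0 \<omega> + Z (\<Delta> * real j) \<omega> \<le> \<alpha> * m (ereal (\<Delta> * real j))})"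
      have G: "GammaD P \<alpha> \<Delta> X0 Z m t = measure P (A m)" for m
        unfolding GammaD_def A_def real K_def by (simp only: tau_le[OF D r])
      have Am: "A m \<in> sets P" for m unfolding A_def by measurable
      have AEne: "AE \<omega> in P. \<forall>j\<in>{1..K}. X0 \<omega> + Z (\<Delta> * real j) \<omega> \<noteq> \<alpha> * l (ereal (\<Delta> * real j))"
      proof (subst AE_finite_all, simp, intro ballI)
        fix j assume j: "j \<in> {1..K}"
        then have pos: "\<Delta> * real j > 0" using D by simp
        have iv: "indep_var borel X0 borel (Z (\<Delta> * real j))"
          using indep_from[OF ps X0m Zj _ ind] pos by simp
        have at: "(\<forall>x. measure (distr P borel X0) {x} = 0) \<or> (\<forall>x. measure (distr P borel (Z (\<Delta> * real j))) {x} = 0)"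
          using atoms pos by blast
        let ?N = "{\<omega>\<in>space P. X0 \<omega> + Z (\<Delta> * real j) \<omega> = \<alpha> * l (ereal (\<Delta> * real j))}"
        have "measure P ?N = 0" by (rule null_sum[OF ps iv at])
        moreover have "?N \<in> sets P" by measurable
        ultimately have "?N \<in> null_sets P" by (simp add: emeasure_eq_measure null_sets_def)
        then show "AE \<omega> in P. X0 \<omega> + Z (\<Delta> * real j) \<omega> \<noteq> \<alpha> * l (ereal (\<Delta> * real j))"
          by (rule AE_I') auto
      qed
      have "(\<lambda>n. integral\<^sup>L P (indicator (A (ls n)))) \<longlonglongrightarrow> integral\<^sup>L P (indicator (A l) :: 'a \<Rightarrow> real)"
      proof (rule integral_dominated_convergence[where w="\<lambda>_. 1"])
        show "indicator (A l) \<in> borel_measurable P" using Am by simp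
        show "indicator (A (ls n)) \<in> borel_measurable P" for n using Am by simp
        show "integrable P (\<lambda>_. 1::real)" by simp
        show "AE x in P. norm (indicator (A (ls n)) x :: real) \<le> 1" for n
          by (simp add: indicator_def)
        show "AE x in P. (\<lambda>n. indicator (A (ls n)) x :: real) \<longlonglongrightarrow> indicator (A l) x"
          using AEne
        proof eventually_elim
          fix \<omega> assume ne: "\<forall>j\<in>{1..K}. X0 \<omega> + Z (\<Delta> * real j) \<omega> \<noteq> \<alpha> * l (ereal (\<Delta> * real j))"
          have "\<forall>j\<in>{..K}. eventually (\<lambda>n. (X0 \<omega> + Z (\<Delta> * real j) \<omega> \<le> \<alpha> * ls n (ereal (\<Delta> * real j)))
               = (X0 \<omega> + Z (\<Delta> * real j) \<omega> \<le> \<alpha> * l (ereal (\<Delta> * real j)))) sequentially"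
          proof
            fix j assume j: "j \<in> {..K}"
            show "eventually (\<lambda>n. (X0 \<omega> + Z (\<Delta> * real j) \<omega> \<le> \<alpha> * ls n (ereal (\<Delta> * real j)))
               = (X0 \<omega> + Z (\<Delta> * real j) \<omega> \<le> \<alpha> * l (ereal (\<Delta> * real j)))) sequentially"
            proof (cases "j = 0")
              case True
              then show ?thesis using l0 by (simp add: zero_ereal_def[symmetric])
            next
              case False
              with j ne have ne': "X0 \<omega> + Z (\<Delta> * real j) \<omega> \<noteq> \<alpha> * l (ereal (\<Delta> * real j))" by auto
              have lim: "(\<lambda>n. \<alpha> * ls n (ereal (\<Delta> * real j))) \<longlonglongrightarrow> \<alpha> * l (ereal (\<Delta> * real j))"
                by (intro tendsto_mult tendsto_const pt_conv[OF D MC])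
              show ?thesis
              proof (cases "X0 \<omega> + Z (\<Delta> * real j) \<omega> < \<alpha> * l (ereal (\<Delta> * real j))")
                case True
                from order_tendstoD(1)[OF lim True] show ?thesis
                  by (rule eventually_mono) (use True in auto)
              next
                case False
                then have gt: "X0 \<omega> + Z (\<Delta> * real j) \<omega> > \<alpha> * l (ereal (\<Delta> * real j))" using ne' by auto
                from order_tendstoD(2)[OF lim gt] show ?thesis
                  by (rule eventually_mono) (use gt in auto)
              qed
            qed
          qed
          then have "eventually (\<lambda>n. \<forall>j\<in>{..K}. (X0 \<omega> + Z (\<Delta> * real j) \<omega> \<le> \<alpha> * ls n (ereal (\<Delta> * real j)))
               = (X0 \<omega> + Z (\<Delta> * real j) \<omega> \<le> \<alpha> * l (ereal (\<Delta> * real j)))) sequentially"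
            by (intro eventually_ball_finite) auto
          then have "eventually (\<lambda>n. indicator (A (ls n)) \<omega> = (indicator (A l) \<omega> :: real)) sequentially"
            by (rule eventually_mono) (auto simp: A_def indicator_def)
          then show "(\<lambda>n. indicator (A (ls n)) \<omega> :: real) \<longlonglongrightarrow> indicator (A l) \<omega>"
            by (rule tendsto_eventually)
        qed
      qed
      then show ?thesis using Am by (simp add: G Int_absorb2 sets.sets_into_space)
    qed
  qed
qed

end
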